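(* Let $a,N$ be natural numbers and let $K$ be a closed subset of $([0,1]^a)^N$. Let $X(K)=\{x\in([0,1]^a)^{\mathbb{Z}}:\exists \ell\in\mathbb{Z}\ \forall n\in\mathbb{Z},\ x|_{\ell+nN}^{\ell+(n+1)N-1}\in K\}$. Then $\overline{\mathrm{mdim}}_{\mathrm{M}}(X(K),\sigma,D)\le \frac{\overline{\dim}_{\mathrm{M}}(K,\|\cdot\|_\infty)}{N}$.
   Context: For $x=(x_n)_{n\in\mathbb{Z}}\in([0,1]^a)^{\mathbb{Z}}$ and integers $\ell<m$, $x|_\ell^m=(x_\ell,\dots,x_m)\in([0,1]^a)^{m-\ell+1}$. $\sigma$ is the shift $(x_n)_n\mapsto(x_{n+1})_n$; $X(K)$ is a shift-invariant closed set. $D((x_n),(y_n))=\sum_{n\in\mathbb{Z}}2^{-|n|}\|x_n-y_n\|_\infty$ with $\|\cdot\|_\infty$ the max norm; on $([0,1]^a)^N\subset\mathbb{R}^{aN}$, $\|\cdot\|_\infty$ is the max over all coordinates. For a compact metric space $(E,\rho)$, $\#(E,\rho,\varepsilon)$ is the minimal number of open sets of $\rho$-diameter $<\varepsilon$ covering $E$, and $\overline{\dim}_{\mathrm{M}}(E,\rho)=\limsup_{\varepsilon\to0}\frac{\log\#(E,\rho,\varepsilon)}{\log(1/\varepsilon)}$. For $(X,T)$ with metric $d$, $d_L(x,y)=\max_{0\le n<L}d(T^nx,T^ny)$, and $\overline{\mathrm{mdim}}_{\mathrm{M}}(X,T,d)=\limsup_{\varepsilon\to0}\lim_{L\to\infty}\frac{\log\#(X,d_L,\varepsilon)}{L\log(1/\varepsilon)}$.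 *)

theory Defs
  imports "HOL-Analysis.Analysis"
begin

text \<open>Points of [0,1]^a are represented as functions nat \<Rightarrow> real, with coordinates
  i < a in [0,1] and all other coordinates equal to 0 (extensional representation).\<close>

definition cube :: "nat \<Rightarrow> (nat \<Rightarrow> real) set" where
  "cube a = {u. (\<forall>i<a. 0 \<le> u i \<and> u i \<le> 1) \<and> (\<forall>i\<ge>a. u i = 0)}"

definition block_space :: "nat \<Rightarrow> nat \<Rightarrow> (nat \<Rightarrow> nat \<Rightarrow> real) set" where
  "block_space a N = {w. (\<forall>j<N. w j \<in> cube a) \<and> (\<forall>j\<ge>N. w j = (\<lambda>_. 0))}"

definition seq_space :: "nat \<Rightarrow> (int \<Rightarrow> nat \<Rightarrow> real) set" where
  "seq_space a = {x. \<forall>n. x n \<in> cube a}"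

definition cdist :: "nat \<Rightarrow> (nat \<Rightarrow> real) \<Rightarrow> (nat \<Rightarrow> real) \<Rightarrow> real" where
  "cdist a u v = Max (insert 0 ((\<lambda>i. \<bar>u i - v i\<bar>) ` {..<a}))"

definition bdist :: "nat \<Rightarrow> nat \<Rightarrow> (nat \<Rightarrow> nat \<Rightarrow> real) \<Rightarrow> (nat \<Rightarrow> nat \<Rightarrow> real) \<Rightarrow> real" where
  "bdist a N w v = Max (insert 0 ((\<lambda>(j,i). \<bar>w j i - v j i\<bar>) ` ({..<N} \<times> {..<a})))"

definition Dmet :: "nat \<Rightarrow> (int \<Rightarrow> nat \<Rightarrow> real) \<Rightarrow> (int \<Rightarrow> nat \<Rightarrow> real) \<Rightarrow> real" where
  "Dmet a x y = (\<Sum>\<^sub>\<infinity>n::int. (1/2) ^ nat \<bar>n\<bar> * cdist a (x n) (y n))"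

definition shift :: "(int \<Rightarrow> 'b) \<Rightarrow> (int \<Rightarrow> 'b)" where
  "shift x = (\<lambda>n. x (n + 1))"

definition restr :: "(int \<Rightarrow> nat \<Rightarrow> real) \<Rightarrow> int \<Rightarrow> nat \<Rightarrow> (nat \<Rightarrow> nat \<Rightarrow> real)" where
  "restr x l N = (\<lambda>j. if j < N then x (l + int j) else (\<lambda>_. 0))"

definition XK :: "nat \<Rightarrow> nat \<Rightarrow> (nat \<Rightarrow> nat \<Rightarrow> real) set \<Rightarrow> (int \<Rightarrow> nat \<Rightarrow> real) set" where
  "XK a N K = {x \<in> seq_space a. \<exists>l::int. \<forall>n::int. restr x (l + n * int N) N \<in> K}"

definition mopen :: "'a set \<Rightarrow> ('a \<Rightarrow> 'a \<Rightarrow> real) \<Rightarrow> 'a set \<Rightarrow> bool" where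
  "mopen E d U \<longleftrightarrow> U \<subseteq> E \<and> (\<forall>x\<in>U. \<exists>r>0. \<forall>y\<in>E. d x y < r \<longrightarrow> y \<in> U)"

definition mdiam :: "('a \<Rightarrow> 'a \<Rightarrow> real) \<Rightarrow> 'a set \<Rightarrow> ereal" where
  "mdiam d U = (SUP p\<in>U \<times> U. ereal (d (fst p) (snd p)))"

definition covnum :: "'a set \<Rightarrow> ('a \<Rightarrow> 'a \<Rightarrow> real) \<Rightarrow> real \<Rightarrow> nat" where
  "covnum E d \<epsilon> = Inf {card F | F. finite F \<and> (\<forall>U\<in>F. mopen E d U \<and> mdiam d U < ereal \<epsilon>)
                                   \<and> E \<subseteq> \<Union>F}"

definition upper_mdim :: "'a set \<Rightarrow> ('a \<Rightarrow> 'a \<Rightarrow> real) \<Rightarrow> ereal" where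
  "upper_mdim E d = Limsup (at_right 0) (\<lambda>\<epsilon>. ereal (ln (real (covnum E d \<epsilon>)) / ln (1 / \<epsilon>)))"

definition dyn_dist :: "('a \<Rightarrow> 'a \<Rightarrow> real) \<Rightarrow> ('a \<Rightarrow> 'a) \<Rightarrow> nat \<Rightarrow> 'a \<Rightarrow> 'a \<Rightarrow> real" where
  "dyn_dist d T L x y = Max ((\<lambda>n. d ((T ^^ n) x) ((T ^^ n) y)) ` {..<L})"

definition upper_metric_mdim :: "'a set \<Rightarrow> ('a \<Rightarrow> 'a) \<Rightarrow> ('a \<Rightarrow> 'a \<Rightarrow> real) \<Rightarrow> ereal" where
  "upper_metric_mdim X T d = Limsup (at_right 0) (\<lambda>\<epsilon>.
     ereal (lim (\<lambda>L. ln (real (covnum X (dyn_dist d T L) \<epsilon>)) / (real L * ln (1 / \<epsilon>)))))"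

end

theory Submission
  imports Defs
begin

lemma geo_int_summable:
  fixes r :: real
  assumes "0 \<le> r" "r < 1"
  shows "(\<lambda>n::int. r ^ nat \<bar>n\<bar>) summable_on UNIV"
proof -
  have "n \<in> range int \<union> range (\<lambda>n. - int n - 1)" for n :: int
  proof (cases "n \<ge> 0")
    case True then have "n = int (nat n)" by simp
    then show ?thesis by blast
  next
    case False then have "n = - int (nat (-n-1)) - 1" by simp
    then show ?thesis by blast
  qed
  then have U: "(UNIV::int set) = range int \<union> range (\<lambda>n. - int n - 1)" by blast
  have s1: "(\<lambda>n::int. r ^ nat \<bar>n\<bar>) summable_on range int"
  proof (subst summable_on_reindex)
    show "inj_on int UNIV" by (simp add: inj_on_def)
    have "(\<lambda>n::nat. r ^ n) summable_on UNIV"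
      using summable_on_UNIV_nonneg_real_iff[of "\<lambda>n. r^n"] assms summable_geometric[of r] by auto
    then show "((\<lambda>n::int. r ^ nat \<bar>n\<bar>) \<circ> int) summable_on UNIV" by (simp add: o_def)
  qed
  have s2: "(\<lambda>n::int. r ^ nat \<bar>n\<bar>) summable_on range (\<lambda>n. - int n - 1)"
  proof (subst summable_on_reindex)
    show "inj_on (\<lambda>n. - int n - 1) UNIV" by (simp add: inj_on_def)
    have "(\<lambda>n::nat. r ^ Suc n) summable_on UNIV"
      using summable_on_UNIV_nonneg_real_iff[of "\<lambda>n. r^Suc n"] assms summable_geometric[of r]
      by (auto simp: summable_mult)
    moreover have "\<And>n. nat \<bar>- int n - 1\<bar> = Suc n" by auto
    ultimately show "((\<lambda>n::int. r ^ nat \<bar>n\<bar>) \<circ> (\<lambda>n. - int n - 1)) summable_on UNIV" by (simp add: o_def)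
  qed
  have "(\<lambda>n::int. r ^ nat \<bar>n\<bar>) summable_on (range int \<union> range (\<lambda>n. - int n - 1))"
    by (rule summable_on_Un_disjoint[OF s1 s2]) auto
  then show ?thesis using U by simp
qed

lemma cdist_nonneg: "0 \<le> cdist a u v"
  unfolding cdist_def by (rule Max_ge_iff[THEN iffD2]) auto

lemma cdist_ge: "i < a \<Longrightarrow> \<bar>u i - v i\<bar> \<le> cdist a u v"
  unfolding cdist_def by (rule Max_ge_iff[THEN iffD2]) auto

lemma cdist_le: "0 \<le> c \<Longrightarrow> (\<And>i. i < a \<Longrightarrow> \<bar>u i - v i\<bar> \<le> c) \<Longrightarrow> cdist a u v \<le> c"
  unfolding cdist_def by (subst Max_le_iff) auto

lemma cdist_cube: "u \<in> cube a \<Longrightarrow> v \<in> cube a \<Longrightarrow> cdist a u v \<le> 1"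
proof (rule cdist_le)
  fix i assume "u \<in> cube a" "v \<in> cube a" "i < a"
  then have "0 \<le> u i" "u i \<le> 1" "0 \<le> v i" "v i \<le> 1" by (auto simp: cube_def)
  then show "\<bar>u i - v i\<bar> \<le> 1" by linarith
qed simp

lemma bdist_nonneg: "0 \<le> bdist a N w v"
  unfolding bdist_def by (rule Max_ge_iff[THEN iffD2]) auto

lemma bdist_ge: "j < N \<Longrightarrow> i < a \<Longrightarrow> \<bar>w j i - v j i\<bar> \<le> bdist a N w v"
  unfolding bdist_def by (rule Max_ge_iff[THEN iffD2]) auto

lemma bdist_le: "0 \<le> c \<Longrightarrow> (\<And>i j. j < N \<Longrightarrow> i < a \<Longrightarrow> \<bar>w j i - v j i\<bar> \<le> c) \<Longrightarrow> bdist a N w v \<le> c"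
  unfolding bdist_def by (subst Max_le_iff) auto

lemma bdist_sym_le: "bdist a N w v \<le> bdist a N v w"
proof (rule bdist_le[OF bdist_nonneg])
  fix i j assume "j < N" "i < a"
  then have "\<bar>v j i - w j i\<bar> \<le> bdist a N v w" by (rule bdist_ge)
  then show "\<bar>w j i - v j i\<bar> \<le> bdist a N v w" by (simp add: abs_minus_commute)
qed

lemma bdist_sym: "bdist a N w v = bdist a N v w"
  using bdist_sym_le[of a N w v] bdist_sym_le[of a N v w] by linarith

lemma bdist_tri: "bdist a N w u \<le> bdist a N w v + bdist a N v u"
proof (rule bdist_le)
  show "0 \<le> bdist a N w v + bdist a N v u" using bdist_nonneg by (simp add: add_nonneg_nonneg)
  fix i j assume "j < N" "i < a"
  then have "\<bar>w j i - v j i\<bar> \<le> bdist a N w v" "\<bar>v j i - u j i\<bar> \<le> bdist a N v u" by (auto intro: bdist_ge)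
  then show "\<bar>w j i - u j i\<bar> \<le> bdist a N w v + bdist a N v u" by linarith
qed

lemma cdist_le_bdist_restr:
  assumes k: "k < N"
  shows "cdist a (x (s + int k)) (y (s + int k)) \<le> bdist a N (restr x s N) (restr y s N)"
proof (rule cdist_le[OF bdist_nonneg])
  fix i assume i: "i < a"
  have "\<bar>restr x s N k i - restr y s N k i\<bar> \<le> bdist a N (restr x s N) (restr y s N)"
    by (rule bdist_ge[OF k i])
  then show "\<bar>x (s + int k) i - y (s + int k) i\<bar> \<le> bdist a N (restr x s N) (restr y s N)"
    using k by (simp add: restr_def)
qed

lemma bdist_restr_le:
  assumes c: "0 \<le> c" and h: "\<And>k. k < N \<Longrightarrow> cdist a (x (s + int k)) (y (s + int k)) \<le> c"
  shows "bdist a N (restr x s N) (restr y s N) \<le> c"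
proof (rule bdist_le[OF c])
  fix i j assume j: "j < N" and i: "i < a"
  have "\<bar>x (s + int j) i - y (s + int j) i\<bar> \<le> cdist a (x (s + int j)) (y (s + int j))"
    by (rule cdist_ge[OF i])
  also have "\<dots> \<le> c" by (rule h[OF j])
  finally show "\<bar>restr x s N j i - restr y s N j i\<bar> \<le> c" using j by (simp add: restr_def)
qed

lemma Dterm_summable:
  assumes "x \<in> seq_space a" "y \<in> seq_space a"
  shows "(\<lambda>n::int. (1/2) ^ nat \<bar>n\<bar> * cdist a (x n) (y n)) summable_on UNIV"
proof (rule summable_on_comparison_test[OF geo_int_summable[of "1/2"]])
  fix n :: int
  have "cdist a (x n) (y n) \<le> 1" using assms by (auto simp: seq_space_def intro: cdist_cube)
  then show "(1/2) ^ nat \<bar>n\<bar> * cdist a (x n) (y n) \<le> (1/2) ^ nat \<bar>n\<bar>"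
    by (simp add: mult_left_le)
  show "0 \<le> (1/2) ^ nat \<bar>n\<bar> * cdist a (x n) (y n)" by (simp add: cdist_nonneg)
qed auto

lemma Dmet_nonneg: "0 \<le> Dmet a x y"
  unfolding Dmet_def by (rule infsum_nonneg) (simp add: cdist_nonneg)

lemma Dmet_ge_term:
  assumes "x \<in> seq_space a" "y \<in> seq_space a"
  shows "(1/2) ^ nat \<bar>n\<bar> * cdist a (x n) (y n) \<le> Dmet a x y"
proof -
  have "infsum (\<lambda>n::int. (1/2) ^ nat \<bar>n\<bar> * cdist a (x n) (y n)) {n} \<le> Dmet a x y"
    unfolding Dmet_def
    by (rule infsum_mono_neutral[OF _ Dterm_summable[OF assms]]) (auto simp: cdist_nonneg)
  then show ?thesis by simp
qed

definition rho :: real where "rho = sqrt (1/2)"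
definition Ssum :: real where "Ssum = infsum (\<lambda>n::int. rho ^ nat \<bar>n\<bar>) UNIV"

lemma rho_props: "0 < rho" "rho < 1" "rho * rho = 1/2"
proof -
  show "0 < rho" unfolding rho_def by simp
  show "rho < 1" unfolding rho_def by (subst real_sqrt_lt_1_iff) simp
  show "rho * rho = 1/2" unfolding rho_def by simp
qed

lemma Ssum_nonneg: "0 \<le> Ssum"
  unfolding Ssum_def by (rule infsum_nonneg) (simp add: less_imp_le[OF rho_props(1)])

lemma half_pow_rho: "(1/2::real) ^ k = rho ^ k * rho ^ k"
  by (simp add: rho_props(3)[symmetric] power_mult_distrib)

lemma Dmet_upper:
  assumes "x \<in> seq_space a" "y \<in> seq_space a" "0 \<le> \<delta>"
    and "\<And>n. \<bar>n\<bar> \<le> int M \<Longrightarrow> cdist a (x n) (y n) \<le> \<delta>"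
  shows "Dmet a x y \<le> (\<delta> + rho ^ M) * Ssum"
proof -
  have gs: "(\<lambda>n::int. rho ^ nat \<bar>n\<bar>) summable_on UNIV"
    using geo_int_summable[of rho] rho_props by auto
  have "Dmet a x y \<le> infsum (\<lambda>n::int. (\<delta> + rho ^ M) * rho ^ nat \<bar>n\<bar>) UNIV"
    unfolding Dmet_def
  proof (rule infsum_mono[OF Dterm_summable[OF assms(1,2)] summable_on_cmult_right[OF gs]])
    fix n :: int
    let ?k = "nat \<bar>n\<bar>"
    have r0: "0 \<le> rho ^ ?k" "rho ^ ?k \<le> 1" using rho_props by (auto simp: power_le_one)
    have c1: "cdist a (x n) (y n) \<le> 1" using assms by (auto simp: seq_space_def intro: cdist_cube)
    have c0: "0 \<le> cdist a (x n) (y n)" by (rule cdist_nonneg)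
    have rM: "0 \<le> rho ^ M" using rho_props by simp
    show "(1/2) ^ ?k * cdist a (x n) (y n) \<le> (\<delta> + rho ^ M) * rho ^ ?k"
    proof (cases "\<bar>n\<bar> \<le> int M")
      case True
      then have "cdist a (x n) (y n) \<le> \<delta>" by (rule assms(4))
      then have "(1/2) ^ ?k * cdist a (x n) (y n) \<le> rho ^ ?k * rho ^ ?k * \<delta>"
        unfolding half_pow_rho using r0 by (simp add: mult_left_mono)
      also have "\<dots> \<le> rho ^ ?k * \<delta>" using r0 assms(3) by (simp add: mult_left_le_one_le mult_right_mono)
      also have "\<dots> \<le> (\<delta> + rho ^ M) * rho ^ ?k" using r0 rM by (simp add: algebra_simps)
      finally show ?thesis .
    next
      case False
      then have "M \<le> ?k" by auto
      then have "rho ^ ?k \<le> rho ^ M" using rho_props by (simp add: power_decreasing)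
      have "(1/2) ^ ?k * cdist a (x n) (y n) \<le> rho ^ ?k * rho ^ ?k"
        unfolding half_pow_rho using r0 c1 by (simp add: mult_left_le)
      also have "\<dots> \<le> rho ^ M * rho ^ ?k" using \<open>rho ^ ?k \<le> rho ^ M\<close> r0 by (simp add: mult_right_mono)
      also have "\<dots> \<le> (\<delta> + rho ^ M) * rho ^ ?k" using r0 assms(3) by (simp add: algebra_simps)
      finally show ?thesis .
    qed
  qed
  also have "\<dots> = (\<delta> + rho ^ M) * Ssum" unfolding Ssum_def by (rule infsum_cmult_right) (use gs in auto)
  finally show ?thesis .
qed


lemma shift_pow: "(shift ^^ n) x = (\<lambda>k. x (k + int n))"
  by (induction n) (auto simp: shift_def add.assoc)

lemma restr_shift: "restr (shift x) s N = restr x (s + 1) N"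
  unfolding restr_def shift_def by (auto simp: algebra_simps)

lemma XK_shift: "x \<in> XK a N K \<Longrightarrow> shift x \<in> XK a N K"
proof -
  assume "x \<in> XK a N K"
  then obtain l where x: "x \<in> seq_space a" "\<forall>n::int. restr x (l + n * int N) N \<in> K"
    unfolding XK_def by auto
  have "\<forall>n::int. restr (shift x) ((l - 1) + n * int N) N \<in> K"
    using x(2) by (simp add: restr_shift)
  moreover have "shift x \<in> seq_space a" using x(1) by (auto simp: seq_space_def shift_def)
  ultimately show ?thesis unfolding XK_def by blast
qed

lemma XK_shift_pow: "x \<in> XK a N K \<Longrightarrow> (shift ^^ n) x \<in> XK a N K"
  by (induction n) (auto intro: XK_shift)

lemma dyn_dist_split:
  assumes "1 \<le> L" "1 \<le> M"
  shows "dyn_dist d T (L + M) x y = max (dyn_dist d T L x y) (dyn_dist d T M ((T ^^ L) x) ((T ^^ L) y))"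
proof -
  define f where "f n = d ((T ^^ n) x) ((T ^^ n) y)" for n
  have "{..<L + M} = {..<L} \<union> {L..<L+M}" by auto
  then have "f ` {..<L + M} = f ` {..<L} \<union> f ` {L..<L+M}" by auto
  moreover have "f ` {L..<L+M} = (\<lambda>n. d ((T ^^ n) ((T ^^ L) x)) ((T ^^ n) ((T ^^ L) y))) ` {..<M}"
  proof -
    have "{L..<L+M} = (\<lambda>n. n + L) ` {..<M}"
      by (auto simp: image_iff) (metis add.commute le_add_diff_inverse lessThan_iff less_diff_conv2)
    then show ?thesis by (auto simp: f_def funpow_add image_iff)
  qed
  moreover have "Max (f ` {..<L} \<union> (\<lambda>n. d ((T ^^ n) ((T ^^ L) x)) ((T ^^ n) ((T ^^ L) y))) ` {..<M})
     = max (Max (f ` {..<L})) (Max ((\<lambda>n. d ((T ^^ n) ((T ^^ L) x)) ((T ^^ n) ((T ^^ L) y))) ` {..<M}))"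
    by (rule Max_Un) (use assms in \<open>auto simp: lessThan_empty_iff\<close>)
  ultimately show ?thesis unfolding dyn_dist_def f_def[symmetric] by simp
qed

definition covers :: "'a set \<Rightarrow> ('a \<Rightarrow> 'a \<Rightarrow> real) \<Rightarrow> real \<Rightarrow> 'a set set \<Rightarrow> bool" where
  "covers E d \<epsilon> F \<longleftrightarrow> finite F \<and> (\<forall>U\<in>F. mopen E d U \<and> mdiam d U < ereal \<epsilon>) \<and> E \<subseteq> \<Union>F"

lemma covnum_alt: "covnum E d \<epsilon> = Inf (card ` Collect (covers E d \<epsilon>))"
  unfolding covnum_def covers_def by (rule arg_cong[where f=Inf]) auto

lemma covnum_le: "covers E d \<epsilon> F \<Longrightarrow> covnum E d \<epsilon> \<le> card F"
  unfolding covnum_alt by (rule cInf_lower) auto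

lemma covnum_obtain:
  assumes "covers E d \<epsilon> F0"
  obtains F where "covers E d \<epsilon> F" "covnum E d \<epsilon> = card F"
proof -
  have "Inf (card ` Collect (covers E d \<epsilon>)) \<in> card ` Collect (covers E d \<epsilon>)"
    by (rule Inf_nat_def1) (use assms in auto)
  then show ?thesis using that unfolding covnum_alt by auto
qed

lemma covnum_pos:
  assumes "covers E d \<epsilon> F0" "E \<noteq> {}"
  shows "1 \<le> covnum E d \<epsilon>"
proof -
  obtain F where F: "covers E d \<epsilon> F" "covnum E d \<epsilon> = card F" using covnum_obtain assms by blast
  then have "F \<noteq> {}" "finite F" using assms(2) by (auto simp: covers_def)
  then show ?thesis using F by (simp add: Suc_le_eq card_gt_0_iff)
qed

lemma covnum_empty: "covnum {} d \<epsilon> = 0"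
proof -
  have "covers {} d \<epsilon> {}" by (auto simp: covers_def)
  then show ?thesis using covnum_le by fastforce
qed

lemma mdiam_le: "(\<And>x y. x \<in> U \<Longrightarrow> y \<in> U \<Longrightarrow> ereal (d x y) \<le> B) \<Longrightarrow> mdiam d U \<le> B"
  unfolding mdiam_def by (rule SUP_least) auto

lemma mdiam_ge: "x \<in> U \<Longrightarrow> y \<in> U \<Longrightarrow> ereal (d x y) \<le> mdiam d U"
  unfolding mdiam_def by (rule SUP_upper2[of "(x,y)"]) auto

lemma covnum_mult:
  assumes d3: "\<And>x y. x \<in> E \<Longrightarrow> y \<in> E \<Longrightarrow> d3 x y = max (d1 x y) (d2 (T x) (T y))"
    and TE: "\<And>x. x \<in> E \<Longrightarrow> T x \<in> E"
    and c1: "covers E d1 \<epsilon> F1" and c2: "covers E d2 \<epsilon> F2"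
  shows "covers E d3 \<epsilon> ((\<lambda>(U,V). {x\<in>U. T x \<in> V}) ` (F1 \<times> F2))"
    and "covnum E d3 \<epsilon> \<le> card F1 * card F2"
proof -
  let ?W = "(\<lambda>(U,V). {x\<in>U. T x \<in> V}) ` (F1 \<times> F2)"
  have fin: "finite F1" "finite F2" using c1 c2 by (auto simp: covers_def)
  have op: "mopen E d3 {x\<in>U. T x \<in> V}" "mdiam d3 {x\<in>U. T x \<in> V} < ereal \<epsilon>" if "U \<in> F1" "V \<in> F2" for U V
  proof -
    have U: "mopen E d1 U" "mdiam d1 U < ereal \<epsilon>" and V: "mopen E d2 V" "mdiam d2 V < ereal \<epsilon>"
      using c1 c2 that by (auto simp: covers_def)
    show "mopen E d3 {x\<in>U. T x \<in> V}"
      unfolding mopen_def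
    proof (intro conjI ballI)
      show "{x \<in> U. T x \<in> V} \<subseteq> E" using U by (auto simp: mopen_def)
      fix x assume x: "x \<in> {x \<in> U. T x \<in> V}"
      obtain r1 where r1: "r1 > 0" "\<forall>y\<in>E. d1 x y < r1 \<longrightarrow> y \<in> U" using U x by (auto simp: mopen_def)
      obtain r2 where r2: "r2 > 0" "\<forall>y\<in>E. d2 (T x) y < r2 \<longrightarrow> y \<in> V" using V x by (auto simp: mopen_def)
      have xE: "x \<in> E" using x U by (auto simp: mopen_def)
      show "\<exists>r>0. \<forall>y\<in>E. d3 x y < r \<longrightarrow> y \<in> {x \<in> U. T x \<in> V}"
        using r1 r2 xE TE d3 by (intro exI[of _ "min r1 r2"]) auto
    qed
    show "mdiam d3 {x\<in>U. T x \<in> V} < ereal \<epsilon>"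
    proof -
      have "mdiam d3 {x\<in>U. T x \<in> V} \<le> max (mdiam d1 U) (mdiam d2 V)"
      proof (rule mdiam_le)
        fix x y assume "x \<in> {x\<in>U. T x \<in> V}" "y \<in> {x\<in>U. T x \<in> V}"
        moreover then have "x \<in> E" "y \<in> E" using U by (auto simp: mopen_def)
        ultimately show "ereal (d3 x y) \<le> max (mdiam d1 U) (mdiam d2 V)"
          using mdiam_ge[of x U y d1] mdiam_ge[of "T x" V "T y" d2] d3
          by (auto simp: max_def split: if_splits)
      qed
      then show ?thesis using U V by (simp add: le_less_trans)
    qed
  qed
  show cov: "covers E d3 \<epsilon> ?W"
    unfolding covers_def
  proof (intro conjI)
    show "finite ?W" using fin by auto
    show "\<forall>U\<in>?W. mopen E d3 U \<and> mdiam d3 U < ereal \<epsilon>" using op by auto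
    show "E \<subseteq> \<Union> ?W"
    proof
      fix x assume x: "x \<in> E"
      obtain U where "U \<in> F1" "x \<in> U" using c1 x by (auto simp: covers_def)
      moreover obtain V where "V \<in> F2" "T x \<in> V" using c2 TE[OF x] by (auto simp: covers_def)
      ultimately show "x \<in> \<Union> ?W" by blast
    qed
  qed
  have "covnum E d3 \<epsilon> \<le> card ?W" by (rule covnum_le[OF cov])
  also have "\<dots> \<le> card (F1 \<times> F2)" using fin by (intro card_image_le) auto
  also have "\<dots> = card F1 * card F2" by (simp add: card_cartesian_product)
  finally show "covnum E d3 \<epsilon> \<le> card F1 * card F2" .
qed

lemma bdist_ball_mopen:
  "mopen K (bdist a N) {w\<in>K. bdist a N c w < r}"
  unfolding mopen_def
proof (intro conjI ballI)
  show "{w\<in>K. bdist a N c w < r} \<subseteq> K" by blast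
  fix w assume w: "w \<in> {w\<in>K. bdist a N c w < r}"
  show "\<exists>r'>0. \<forall>y\<in>K. bdist a N w y < r' \<longrightarrow> y \<in> {w\<in>K. bdist a N c w < r}"
  proof (intro exI[of _ "r - bdist a N c w"] conjI ballI impI)
    show "0 < r - bdist a N c w" using w by simp
    fix y assume y: "y \<in> K" "bdist a N w y < r - bdist a N c w"
    have "bdist a N c y \<le> bdist a N c w + bdist a N w y" by (rule bdist_tri)
    then show "y \<in> {w\<in>K. bdist a N c w < r}" using y by simp
  qed
qed
lemma K_covers:
  assumes K: "K \<subseteq> block_space a N" and d: "\<delta> > 0"
  shows "\<exists>F. covers K (bdist a N) \<delta> F"
proof -
  obtain m :: nat where m: "m > 0" "1 / real m < \<delta> / 3"
  proof -
    obtain m :: nat where "inverse (real (Suc m)) < \<delta> / 3" using reals_Archimedean[of "\<delta>/3"] d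
      by auto
    then have "1 / real (Suc m) < \<delta> / 3" by (simp add: inverse_eq_divide)
    then show ?thesis using that[of "Suc m"] by blast
  qed
  define J where "J = {..<N} \<times> {..<a}"
  define G where "G = PiE J (\<lambda>_. {0..m})"
  define cen where "cen g = (\<lambda>j i. if j < N \<and> i < a then real (g (j,i)) / real m else 0)" for g :: "nat \<times> nat \<Rightarrow> nat"
  define B where "B g = {w\<in>K. bdist a N (cen g) w < \<delta>/3}" for g
  have "covers K (bdist a N) \<delta> (B ` G)"
    unfolding covers_def
  proof (intro conjI ballI)
    show "finite (B ` G)" unfolding G_def J_def by (intro finite_imageI finite_PiE) auto
    fix U assume "U \<in> B ` G"
    then obtain g where U: "U = B g" by auto
    show "mopen K (bdist a N) U" unfolding U B_def by (rule bdist_ball_mopen)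
    have "mdiam (bdist a N) U \<le> ereal (2 * \<delta> / 3)"
    proof (rule mdiam_le)
      fix x y assume "x \<in> U" "y \<in> U"
      then have "bdist a N (cen g) x < \<delta>/3" "bdist a N (cen g) y < \<delta>/3" unfolding U B_def by auto
      moreover have "bdist a N x y \<le> bdist a N x (cen g) + bdist a N (cen g) y" by (rule bdist_tri)
      moreover have "bdist a N x (cen g) = bdist a N (cen g) x" by (rule bdist_sym)
      ultimately show "ereal (bdist a N x y) \<le> ereal (2 * \<delta> / 3)" by simp
    qed
    moreover have "ereal (2 * \<delta> / 3) < ereal \<delta>" using d by simp
    ultimately show "mdiam (bdist a N) U < ereal \<delta>" by (rule le_less_trans)
  next
    show "K \<subseteq> \<Union> (B ` G)"
    proof
      fix w assume wK: "w \<in> K"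
      define g where "g = restrict (\<lambda>(j,i). nat \<lfloor>real m * w j i\<rfloor>) J"
      have wb: "0 \<le> w j i \<and> w j i \<le> 1" if "j < N" "i < a" for j i
        using K wK that by (auto simp: block_space_def cube_def)
      have "g \<in> G" unfolding G_def g_def
      proof (rule restrict_PiE_iff[THEN iffD2], intro ballI)
        fix p assume "p \<in> J"
        then obtain j i where p: "p = (j,i)" "j < N" "i < a" unfolding J_def by auto
        have "real m * w j i \<le> real m" using wb[OF p(2,3)] by (simp add: mult_left_le)
        then have "\<lfloor>real m * w j i\<rfloor> \<le> \<lfloor>real m\<rfloor>" by (rule floor_mono)
        then have "\<lfloor>real m * w j i\<rfloor> \<le> int m" by simp
        then show "(case p of (j, i) \<Rightarrow> nat \<lfloor>real m * w j i\<rfloor>) \<in> {0..m}" using p by auto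
      qed
      moreover have "bdist a N (cen g) w \<le> 1 / real m"
      proof (rule bdist_le)
        fix i j assume ji: "j < N" "i < a"
        then have "(j,i) \<in> J" unfolding J_def by auto
        then have cg: "cen g j i = real (nat \<lfloor>real m * w j i\<rfloor>) / real m" using ji by (simp add: cen_def g_def)
        have "0 \<le> real m * w j i" using wb[OF ji] by simp
        then have fl: "real (nat \<lfloor>real m * w j i\<rfloor>) = of_int \<lfloor>real m * w j i\<rfloor>" by simp
        have "of_int \<lfloor>real m * w j i\<rfloor> \<le> real m * w j i" "real m * w j i < of_int \<lfloor>real m * w j i\<rfloor> + 1"
          by linarith+
        then have "\<bar>real m * w j i - of_int \<lfloor>real m * w j i\<rfloor>\<bar> \<le> 1" by linarith
        moreover have "w j i - of_int \<lfloor>real m * w j i\<rfloor> / real m = (real m * w j i - of_int \<lfloor>real m * w j i\<rfloor>) / real m"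
          using m(1) by (simp add: field_simps)
        ultimately have "\<bar>w j i - of_int \<lfloor>real m * w j i\<rfloor> / real m\<bar> \<le> 1 / real m"
          using m(1) by (simp add: abs_divide divide_right_mono)
        then show "\<bar>cen g j i - w j i\<bar> \<le> 1 / real m" unfolding cg fl by (simp add: abs_minus_commute)
      qed simp
      then have "bdist a N (cen g) w < \<delta>/3" using m(2) by linarith
      then have "w \<in> B g" unfolding B_def using wK by blast
      ultimately show "w \<in> \<Union> (B ` G)" by blast
    qed
  qed
  then show ?thesis by blast
qed

lemma bdist_self: "bdist a N w w = 0"
  using bdist_le[of 0 N a w w] bdist_nonneg[of a N w w] by simp

lemma cdist_le_Dmet:
  assumes "x \<in> seq_space a" "y \<in> seq_space a"
  shows "cdist a (x n) (y n) \<le> 2 ^ nat \<bar>n\<bar> * Dmet a x y"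
proof -
  let ?k = "nat \<bar>n\<bar>"
  have "(1/2) ^ ?k * cdist a (x n) (y n) \<le> Dmet a x y" by (rule Dmet_ge_term[OF assms])
  then have "2 ^ ?k * ((1/2) ^ ?k * cdist a (x n) (y n)) \<le> 2 ^ ?k * Dmet a x y"
    by (rule mult_left_mono) simp
  moreover have "(2::real) ^ ?k * (1/2) ^ ?k = 1" by (simp add: power_mult_distrib[symmetric])
  ultimately show ?thesis by (simp add: mult.assoc[symmetric])
qed

lemma Dmet_le_dyn:
  assumes "1 \<le> L"
  shows "Dmet a x y \<le> dyn_dist (Dmet a) shift L x y"
proof -
  have "0 \<in> {..<L}" using assms by simp
  then have "Dmet a ((shift ^^ 0) x) ((shift ^^ 0) y) \<le> dyn_dist (Dmet a) shift L x y"
    unfolding dyn_dist_def by (intro Max_ge) (auto intro!: image_eqI[where x=0])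
  then show ?thesis by simp
qed

lemma dyn_le:
  assumes "1 \<le> L" "\<And>m. m < L \<Longrightarrow> Dmet a ((shift ^^ m) x) ((shift ^^ m) y) \<le> c"
  shows "dyn_dist (Dmet a) shift L x y \<le> c"
  unfolding dyn_dist_def using assms by (subst Max_le_iff) (auto simp: lessThan_empty_iff)

lemma seq_shift_pow: "x \<in> seq_space a \<Longrightarrow> (shift ^^ m) x \<in> seq_space a"
  by (simp add: shift_pow seq_space_def)

lemma XK_seq: "XK a N K \<subseteq> seq_space a"
  unfolding XK_def by blast

lemma block_decomp:
  fixes n p A B :: int and N :: nat
  assumes "N \<ge> 1" "0 \<le> p" "p < int N" "- (A * int N) \<le> n - p" "n - p < (B + 1) * int N"
  shows "\<exists>j k. - A \<le> j \<and> j \<le> B \<and> k < N \<and> n = p + j * int N + int k"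
proof -
  define j where "j = (n - p) div int N"
  define k where "k = (n - p) mod int N"
  have N0: "int N > 0" using assms(1) by simp
  have e: "n - p = j * int N + k" unfolding j_def k_def by simp
  have k: "0 \<le> k" "k < int N" unfolding k_def using N0 by auto
  have j1: "- A \<le> j"
  proof (rule ccontr)
    assume "\<not> - A \<le> j"
    then have "j + 1 \<le> - A" by simp
    then have "(j + 1) * int N \<le> (- A) * int N" using N0 by (intro mult_right_mono) auto
    then show False using e k assms(4) by (simp add: algebra_simps)
  qed
  have j2: "j \<le> B"
  proof (rule ccontr)
    assume "\<not> j \<le> B"
    then have "B + 1 \<le> j" by simp
    then have "(B + 1) * int N \<le> j * int N" using N0 by (simp add: mult_right_mono)
    then show False using e k assms(5) by (simp add: algebra_simps)
  qed
  have "n = p + j * int N + int (nat k)" using e k by simp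
  moreover have "nat k < N" using k by simp
  ultimately show ?thesis using j1 j2 by blast
qed

lemma X_cover:
  fixes a N M L :: nat and K F and \<delta> \<epsilon> :: real
  assumes N: "N \<ge> 1" and \<delta>: "\<delta> > 0" and F: "covers K (bdist a N) \<delta> F" and L: "L \<ge> 1"
    and eps: "(3 * \<delta> + rho ^ M) * Ssum < \<epsilon>"
  shows "\<exists>G. covers (XK a N K) (dyn_dist (Dmet a) shift L) \<epsilon> G \<and> card G \<le> N * card F ^ (L div N + 2 * M + 3)"
proof -
  define X where "X = XK a N K"
  define A :: int where "A = int M + 1"
  define B :: int where "B = int (L div N + M + 1)"
  define J where "J = {-A..B}"
  define W where "W p f = {x\<in>X. \<forall>j\<in>J. \<exists>v\<in>f j. bdist a N (restr x (p + j * int N) N) v < \<delta>}"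
    for p :: int and f :: "int \<Rightarrow> (nat \<Rightarrow> nat \<Rightarrow> real) set"
  define G where "G = (\<lambda>(p,f). W p f) ` ({0..<int N} \<times> PiE J (\<lambda>_. F))"
  let ?d = "dyn_dist (Dmet a) shift L"
  have finF: "finite F" using F by (simp add: covers_def)
  have finJ: "finite J" unfolding J_def by simp
  have A0: "A \<ge> 1" unfolding A_def by simp
  have B0: "B \<ge> 1" unfolding B_def by simp
  have J0: "0 \<in> J" unfolding J_def using A0 B0 by simp
  have cardJ: "card J = L div N + 2 * M + 3"
    unfolding J_def A_def B_def by simp
  have N0: "int N > 0" using N by simp
  have XS: "X \<subseteq> seq_space a" unfolding X_def by (rule XK_seq)
  have cov: "X \<subseteq> \<Union> G"
  proof
    fix x assume x: "x \<in> X"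
    then obtain l where l: "\<forall>n::int. restr x (l + n * int N) N \<in> K" unfolding X_def XK_def by blast
    define p where "p = l mod int N"
    define q where "q = l div int N"
    have lpq: "l = q * int N + p" unfolding p_def q_def by simp
    have inK: "restr x (p + j * int N) N \<in> K" for j
    proof -
      have "p + j * int N = l + (j - q) * int N" using lpq by (simp add: algebra_simps)
      then show ?thesis using l by metis
    qed
    have exU: "\<exists>U. U \<in> F \<and> restr x (p + j * int N) N \<in> U" for j
      using F inK[of j] by (auto simp: covers_def)
    define f where "f = restrict (\<lambda>j. SOME U. U \<in> F \<and> restr x (p + j * int N) N \<in> U) J"
    have fj: "f j \<in> F \<and> restr x (p + j * int N) N \<in> f j" if "j \<in> J" for j
      unfolding f_def using that someI_ex[OF exU[of j]] by simp
    have "f \<in> PiE J (\<lambda>_. F)" unfolding f_def using fj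
      by (auto simp: f_def intro!: restrict_PiE_iff[THEN iffD2])
    moreover have "p \<in> {0..<int N}" unfolding p_def using N0 by simp
    moreover have "\<exists>v\<in>f j. bdist a N (restr x (p + j * int N) N) v < \<delta>" if "j \<in> J" for j
      using fj[OF that] \<delta> bdist_self[of a N "restr x (p + j * int N) N"] by (intro bexI[of _ "restr x (p + j * int N) N"]) auto
    then have "x \<in> W p f" unfolding W_def using x by blast
    ultimately show "x \<in> \<Union> G" unfolding G_def by blast
  qed
  have props: "mopen X ?d (W p f) \<and> mdiam ?d (W p f) < ereal \<epsilon>"
    if p: "p \<in> {0..<int N}" and f: "f \<in> PiE J (\<lambda>_. F)" for p f
  proof
    show "mopen X ?d (W p f)"
      unfolding mopen_def
    proof (intro conjI ballI)
      show "W p f \<subseteq> X" unfolding W_def by blast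
      fix x assume xW: "x \<in> W p f"
      then have xX: "x \<in> X" unfolding W_def by blast
      have "\<forall>j\<in>J. \<exists>v. v \<in> f j \<and> bdist a N (restr x (p + j * int N) N) v < \<delta>"
        using xW unfolding W_def by blast
      then obtain v where v: "\<And>j. j \<in> J \<Longrightarrow> v j \<in> f j \<and> bdist a N (restr x (p + j * int N) N) (v j) < \<delta>"
        by metis
      define \<eta> where "\<eta> = Min ((\<lambda>j. \<delta> - bdist a N (restr x (p + j * int N) N) (v j)) ` J)"
      have \<eta>0: "\<eta> > 0" unfolding \<eta>_def using finJ J0 v by (subst Min_gr_iff) auto
      have \<eta>le: "\<eta> \<le> \<delta> - bdist a N (restr x (p + j * int N) N) (v j)" if "j \<in> J" for j
        unfolding \<eta>_def using finJ that by (intro Min_le) auto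
      define R where "R = nat ((A + B + 2) * int N)"
      have Rb: "nat \<bar>p + j * int N + int k\<bar> \<le> R" if "j \<in> J" "k < N" for j k
      proof -
        have j: "- A \<le> j" "j \<le> B" using that unfolding J_def by auto
        have "(- A) * int N \<le> j * int N" using j N0 by (intro mult_right_mono) auto
        moreover have "j * int N \<le> B * int N" using j N0 by (intro mult_right_mono) auto
        moreover have "0 \<le> A * int N" "0 \<le> B * int N" using A0 B0 N0 by auto
        moreover have e: "(A + B + 2) * int N = A * int N + B * int N + 2 * int N" by (simp add: algebra_simps)
        moreover have "int k < int N" using that(2) by simp
        moreover have "0 \<le> p" "p < int N" using p by auto
        ultimately have "p + j * int N + int k \<le> (A + B + 2) * int N" "- ((A + B + 2) * int N) \<le> p + j * int N + int k"
          by linarith+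
        then have "\<bar>p + j * int N + int k\<bar> \<le> (A + B + 2) * int N" by (simp add: abs_le_iff)
        then show ?thesis unfolding R_def by linarith
      qed
      show "\<exists>r>0. \<forall>y\<in>X. ?d x y < r \<longrightarrow> y \<in> W p f"
      proof (intro exI[of _ "\<eta> / 2 ^ R"] conjI ballI impI)
        show "\<eta> / 2 ^ R > 0" using \<eta>0 by simp
        fix y assume yX: "y \<in> X" and dy: "?d x y < \<eta> / 2 ^ R"
        have Dxy: "Dmet a x y < \<eta> / 2 ^ R" using Dmet_le_dyn[OF L, of a x y] dy by linarith
        have xs: "x \<in> seq_space a" "y \<in> seq_space a" using xX yX XS by auto
        have "\<exists>w\<in>f j. bdist a N (restr y (p + j * int N) N) w < \<delta>" if j: "j \<in> J" for j
        proof (intro bexI[of _ "v j"])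
          show "v j \<in> f j" using v[OF j] by blast
          have "bdist a N (restr x (p + j * int N) N) (restr y (p + j * int N) N) \<le> 2 ^ R * Dmet a x y"
          proof (rule bdist_restr_le)
            show "0 \<le> 2 ^ R * Dmet a x y" by (simp add: Dmet_nonneg)
            fix k assume k: "k < N"
            have "cdist a (x (p + j * int N + int k)) (y (p + j * int N + int k))
                \<le> 2 ^ nat \<bar>p + j * int N + int k\<bar> * Dmet a x y" by (rule cdist_le_Dmet[OF xs])
            also have "\<dots> \<le> 2 ^ R * Dmet a x y"
              using Rb[OF j k] by (intro mult_right_mono power_increasing) (auto simp: Dmet_nonneg)
            finally show "cdist a (x (p + j * int N + int k)) (y (p + j * int N + int k)) \<le> 2 ^ R * Dmet a x y" .
          qed
          also have "2 ^ R * Dmet a x y < \<eta>" using Dxy by (simp add: field_simps)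
          finally have "bdist a N (restr y (p + j * int N) N) (restr x (p + j * int N) N) < \<eta>"
            by (simp add: bdist_sym)
          moreover have "bdist a N (restr y (p + j * int N) N) (v j) \<le>
              bdist a N (restr y (p + j * int N) N) (restr x (p + j * int N) N) + bdist a N (restr x (p + j * int N) N) (v j)"
            by (rule bdist_tri)
          ultimately show "bdist a N (restr y (p + j * int N) N) (v j) < \<delta>" using \<eta>le[OF j] by linarith
        qed
        then show "y \<in> W p f" unfolding W_def using yX by blast
      qed
    qed
    have diam: "?d x y \<le> (3 * \<delta> + rho ^ M) * Ssum" if xW: "x \<in> W p f" and yW: "y \<in> W p f" for x y
    proof -
      have xs: "x \<in> seq_space a" "y \<in> seq_space a" using xW yW XS unfolding W_def by auto
      have blk: "bdist a N (restr x (p + j * int N) N) (restr y (p + j * int N) N) < 3 * \<delta>" if j: "j \<in> J" for j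
      proof -
        obtain v where v: "v \<in> f j" "bdist a N (restr x (p + j * int N) N) v < \<delta>" using xW j unfolding W_def by blast
        obtain v' where v': "v' \<in> f j" "bdist a N (restr y (p + j * int N) N) v' < \<delta>" using yW j unfolding W_def by blast
        have "f j \<in> F" using f j by auto
        then have "mdiam (bdist a N) (f j) < ereal \<delta>" using F by (auto simp: covers_def)
        moreover have "ereal (bdist a N v v') \<le> mdiam (bdist a N) (f j)" by (rule mdiam_ge[OF v(1) v'(1)])
        ultimately have "ereal (bdist a N v v') < ereal \<delta>" using order.strict_trans1 by blast
        then have vv: "bdist a N v v' < \<delta>" by simp
        have "bdist a N (restr x (p + j * int N) N) (restr y (p + j * int N) N) \<le>
            bdist a N (restr x (p + j * int N) N) v + bdist a N v (restr y (p + j * int N) N)" by (rule bdist_tri)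
        moreover have "bdist a N v (restr y (p + j * int N) N) \<le> bdist a N v v' + bdist a N v' (restr y (p + j * int N) N)"
          by (rule bdist_tri)
        moreover have "bdist a N v' (restr y (p + j * int N) N) = bdist a N (restr y (p + j * int N) N) v'" by (rule bdist_sym)
        ultimately show ?thesis using v(2) v'(2) vv by linarith
      qed
      have pt: "cdist a (x n) (y n) \<le> 3 * \<delta>" if n1: "- int M \<le> n" and n2: "n \<le> int L - 1 + int M" for n
      proof -
        have p0: "0 \<le> p" "p < int N" using p by auto
        have "int M * 1 \<le> int M * int N" using N by (intro mult_left_mono) auto
        then have "int M \<le> int M * int N" by simp
        then have c1: "- (A * int N) \<le> n - p" using n1 p0 unfolding A_def by (simp add: algebra_simps)
        have "int L = int (L div N) * int N + int (L mod N)" by (metis of_nat_add of_nat_mult div_mult_mod_eq)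
        moreover have "int (L mod N) < int N" using N by simp
        ultimately have "int L < (int (L div N) + 1) * int N" by (simp add: algebra_simps)
        moreover have "(int M + 1) * 1 \<le> (int M + 1) * int N" using N by (intro mult_left_mono) auto
        ultimately have c2: "n - p < (B + 1) * int N" using n2 p0 unfolding B_def by (simp add: algebra_simps)
        obtain j k where jk: "- A \<le> j" "j \<le> B" "k < N" "n = p + j * int N + int k"
          using block_decomp[OF N p0 c1 c2] by blast
        have "j \<in> J" unfolding J_def using jk by simp
        have "cdist a (x (p + j * int N + int k)) (y (p + j * int N + int k))
            \<le> bdist a N (restr x (p + j * int N) N) (restr y (p + j * int N) N)"
          by (rule cdist_le_bdist_restr[OF jk(3)])
        also have "\<dots> < 3 * \<delta>" by (rule blk[OF \<open>j \<in> J\<close>])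
        finally show ?thesis using jk(4) by simp
      qed
      show ?thesis
      proof (rule dyn_le[OF L])
        fix m assume m: "m < L"
        show "Dmet a ((shift ^^ m) x) ((shift ^^ m) y) \<le> (3 * \<delta> + rho ^ M) * Ssum"
        proof (rule Dmet_upper)
          show "(shift ^^ m) x \<in> seq_space a" "(shift ^^ m) y \<in> seq_space a" using xs by (auto intro: seq_shift_pow)
          show "0 \<le> 3 * \<delta>" using \<delta> by simp
          fix n :: int assume "\<bar>n\<bar> \<le> int M"
          then have "- int M \<le> n + int m" "n + int m \<le> int L - 1 + int M" using m by auto
          then show "cdist a ((shift ^^ m) x n) ((shift ^^ m) y n) \<le> 3 * \<delta>"
            unfolding shift_pow by (rule pt)
        qed
      qed
    qed
    have "mdiam ?d (W p f) \<le> ereal ((3 * \<delta> + rho ^ M) * Ssum)"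
      by (rule mdiam_le) (use diam in simp)
    moreover have "ereal ((3 * \<delta> + rho ^ M) * Ssum) < ereal \<epsilon>" using eps by simp
    ultimately show "mdiam ?d (W p f) < ereal \<epsilon>" by (rule order.strict_trans1)
  qed
  have covG: "covers X ?d \<epsilon> G"
    unfolding covers_def
  proof (intro conjI)
    show "finite G" unfolding G_def using finF finJ by (intro finite_imageI finite_cartesian_product finite_PiE) auto
    show "\<forall>U\<in>G. mopen X ?d U \<and> mdiam ?d U < ereal \<epsilon>" unfolding G_def using props by auto
    show "X \<subseteq> \<Union> G" by (rule cov)
  qed
  have "card G \<le> card ({0..<int N} \<times> PiE J (\<lambda>_. F))" unfolding G_def
    using finF finJ by (intro card_image_le finite_cartesian_product finite_PiE) auto
  also have "\<dots> = N * card F ^ card J"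
    using finJ by (simp add: card_cartesian_product card_PiE)
  finally show ?thesis using covG cardJ unfolding X_def by auto
qed

lemma fekete_aux:
  fixes u :: "nat \<Rightarrow> real"
  assumes sub: "\<And>m n. 1 \<le> m \<Longrightarrow> 1 \<le> n \<Longrightarrow> u (m + n) \<le> u m + u n"
    and m: "1 \<le> m" and r: "1 \<le> r"
  shows "u (q * m + r) \<le> real q * u m + u r"
proof (induction q)
  case 0 then show ?case by simp
next
  case (Suc q)
  have "u (Suc q * m + r) = u (m + (q * m + r))" by (simp add: algebra_simps)
  also have "\<dots> \<le> u m + u (q * m + r)" using m r by (intro sub) auto
  also have "\<dots> \<le> u m + (real q * u m + u r)" using Suc by simp
  finally show ?case by (simp add: algebra_simps)
qed

lemma fekete:
  fixes u :: "nat \<Rightarrow> real"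
  assumes nn: "\<And>n. 0 \<le> u n" and sub: "\<And>m n. 1 \<le> m \<Longrightarrow> 1 \<le> n \<Longrightarrow> u (m + n) \<le> u m + u n"
  shows "(\<lambda>n. u n / real n) \<longlonglongrightarrow> (INF n\<in>{1..}. u n / real n)"
    and "\<And>m. 1 \<le> m \<Longrightarrow> (INF n\<in>{1..}. u n / real n) \<le> u m / real m"
proof -
  define l where "l = (INF n\<in>{1..}. u n / real n)"
  have bdd: "bdd_below ((\<lambda>n. u n / real n) ` {1..})"
    by (rule bdd_belowI[of _ 0]) (use nn in auto)
  show lle: "l \<le> u m / real m" if "1 \<le> m" for m
    unfolding l_def by (rule cINF_lower[OF bdd]) (use that in auto)
  show "(\<lambda>n. u n / real n) \<longlonglongrightarrow> (INF n\<in>{1..}. u n / real n)"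
    unfolding l_def[symmetric]
  proof (rule metric_LIMSEQ_I)
    fix e :: real assume e: "0 < e"
    have "l < l + e/2" using e by simp
    then obtain m where m: "m \<in> {1..}" "u m / real m < l + e/2"
      unfolding l_def by (subst (asm) cINF_less_iff[OF _ bdd]) auto
    have m1: "1 \<le> m" using m by simp
    define C where "C = Max (u ` {1..m})"
    have C: "u r \<le> C" if "1 \<le> r" "r \<le> m" for r
      unfolding C_def using that by (intro Max_ge) auto
    have "u m \<le> C" using C[of m] m1 by simp
    then have C0: "0 \<le> C" using nn[of m] by linarith
    obtain n0 :: nat where n0: "C / (e/2) < real n0" using reals_Archimedean2 by blast
    show "\<exists>no. \<forall>n\<ge>no. dist (u n / real n) l < e"
    proof (intro exI[of _ "Suc n0"] allI impI)
      fix n assume n: "Suc n0 \<le> n"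
      then have n1: "1 \<le> n" by simp
      define q where "q = (n - 1) div m"
      define r where "r = (n - 1) mod m + 1"
      have nqr: "n = q * m + r" unfolding q_def r_def using n1 by simp
      have r1: "1 \<le> r" "r \<le> m" unfolding r_def using m1 by (auto simp: Suc_le_eq)
      have "u n \<le> real q * u m + u r" unfolding nqr by (rule fekete_aux[OF sub m1 r1(1)])
      also have "\<dots> \<le> real q * u m + C" using C[OF r1] by simp
      finally have un: "u n \<le> real q * u m + C" .
      have qm: "real q * real m \<le> real n" unfolding nqr by simp
      have "real q * u m = (real q * real m) * (u m / real m)" using m1 by simp
      also have "\<dots> \<le> real n * (u m / real m)" using qm nn[of m] by (intro mult_right_mono) auto
      finally have "u n \<le> real n * (u m / real m) + C" using un by linarith
      then have "u n / real n \<le> u m / real m + C / real n" using n1 by (simp add: field_simps)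
      moreover have "C / real n < e/2"
      proof -
        have "C / (e/2) < real n" using n0 n by linarith
        then show ?thesis using e n1 by (simp add: field_simps)
      qed
      ultimately have up: "u n / real n < l + e" using m(2) by linarith
      have lo: "l \<le> u n / real n" by (rule lle[OF n1])
      show "dist (u n / real n) l < e" using up lo by (simp add: dist_real_def)
    qed
  qed
qed

lemma le_of_le_plus_inv:
  fixes l \<alpha> \<beta> :: real
  assumes "\<And>L::nat. 1 \<le> L \<Longrightarrow> l \<le> \<alpha> + \<beta> / real L"
  shows "l \<le> \<alpha>"
proof (rule ccontr)
  assume "\<not> l \<le> \<alpha>"
  then have d: "l - \<alpha> > 0" by simp
  obtain L :: nat where L: "\<bar>\<beta>\<bar> / (l - \<alpha>) < real L" using reals_Archimedean2 by blast
  have L1: "1 \<le> L"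
  proof (rule ccontr)
    assume "\<not> 1 \<le> L" then have "L = 0" by simp
    moreover have "0 \<le> \<bar>\<beta>\<bar> / (l - \<alpha>)" using d by simp
    ultimately show False using L by simp
  qed
  have "\<bar>\<beta>\<bar> < real L * (l - \<alpha>)" using L d by (simp add: field_simps)
  then have "\<beta> / real L < l - \<alpha>" using L1 by (simp add: field_simps)
  then show False using assms[OF L1] by linarith
qed

definition cc :: real where "cc = 8 * (Ssum + 1)"

lemma cc_pos: "cc > 0" unfolding cc_def using Ssum_nonneg by simp

lemma eps_bound:
  assumes N: "N \<ge> 1" and K: "K \<subseteq> block_space a N" and e0: "0 < \<epsilon>" and e1: "\<epsilon> < 1"
  shows "lim (\<lambda>L. ln (real (covnum (XK a N K) (dyn_dist (Dmet a) shift L) \<epsilon>)) / (real L * ln (1 / \<epsilon>)))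
      \<le> ln (real (covnum K (bdist a N) (\<epsilon> / cc))) / (real N * ln (1 / \<epsilon>))"
proof -
  define X where "X = XK a N K"
  define \<delta> where "\<delta> = \<epsilon> / cc"
  have \<delta>0: "\<delta> > 0" unfolding \<delta>_def using e0 cc_pos by simp
  obtain M where M: "rho ^ M < \<delta>" using real_arch_pow_inv[OF \<delta>0 rho_props(2)] by blast
  have eps: "(3 * \<delta> + rho ^ M) * Ssum < \<epsilon>"
  proof -
    have "(3 * \<delta> + rho ^ M) * Ssum \<le> (4 * \<delta>) * Ssum" using M Ssum_nonneg by (intro mult_right_mono) auto
    also have "\<dots> = \<epsilon> * (Ssum / (2 * (Ssum + 1)))" unfolding \<delta>_def cc_def using Ssum_nonneg by (simp add: field_simps)
    also have "\<dots> < \<epsilon> * 1" using e0 Ssum_nonneg by (intro mult_strict_left_mono) (auto simp: field_simps)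
    finally show ?thesis by simp
  qed
  obtain F0 where "covers K (bdist a N) \<delta> F0" using K_covers[OF K \<delta>0] by blast
  then obtain F where F: "covers K (bdist a N) \<delta> F" "covnum K (bdist a N) \<delta> = card F"
    using covnum_obtain by blast
  define C where "C = card F"
  have lnE: "ln (1 / \<epsilon>) > 0" using e0 e1 by simp
  let ?d = "\<lambda>L. dyn_dist (Dmet a) shift L"
  define u where "u L = ln (real (covnum X (?d L) \<epsilon>))" for L
  have Gex: "\<exists>G. covers X (?d L) \<epsilon> G \<and> card G \<le> N * C ^ (L div N + 2 * M + 3)" if "L \<ge> 1" for L
    unfolding X_def C_def by (rule X_cover[OF N \<delta>0 F(1) that eps])
  have seq_eq: "(\<lambda>L. ln (real (covnum X (?d L) \<epsilon>)) / (real L * ln (1 / \<epsilon>))) = (\<lambda>L. (u L / real L) / ln (1 / \<epsilon>))"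
    unfolding u_def by (simp add: field_simps)
  show ?thesis
  proof (cases "X = {}")
    case True
    then have "\<And>L. covnum X (?d L) \<epsilon> = 0" by (simp add: covnum_empty)
    then have "(\<lambda>L. ln (real (covnum X (?d L) \<epsilon>)) / (real L * ln (1 / \<epsilon>))) = (\<lambda>L. 0)" by simp
    then have "lim (\<lambda>L. ln (real (covnum X (?d L) \<epsilon>)) / (real L * ln (1 / \<epsilon>))) = 0"
      by (simp add: limI)
    moreover have "0 \<le> ln (real (covnum K (bdist a N) (\<epsilon> / cc))) / (real N * ln (1 / \<epsilon>))"
    proof -
      have "0 \<le> ln (real (covnum K (bdist a N) (\<epsilon> / cc)))"
        by (cases "covnum K (bdist a N) (\<epsilon> / cc) = 0") auto
      then show ?thesis using lnE by simp
    qed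
    ultimately show ?thesis unfolding X_def by simp
  next
    case False
    then obtain x0 where x0: "x0 \<in> X" by blast
    have Kne: "K \<noteq> {}" using x0 unfolding X_def XK_def by blast
    have C1: "1 \<le> C" using covnum_pos[OF F(1) Kne] F(2) C_def by simp
    have cov1: "1 \<le> covnum X (?d L) \<epsilon>" if "L \<ge> 1" for L
      using Gex[OF that] covnum_pos False by blast
    define v where "v L = (if L = 0 then 0 else u L)" for L
    have vnn: "0 \<le> v L" for L
      unfolding v_def u_def using cov1[of L] by auto
    have vsub: "v (m + n) \<le> v m + v n" if m: "1 \<le> m" and n: "1 \<le> n" for m n
    proof -
      obtain F1 where F1: "covers X (?d m) \<epsilon> F1" "covnum X (?d m) \<epsilon> = card F1"
        using Gex[OF m] covnum_obtain by metis
      obtain F2 where F2: "covers X (?d n) \<epsilon> F2" "covnum X (?d n) \<epsilon> = card F2"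
        using Gex[OF n] covnum_obtain by metis
      have "covnum X (?d (m + n)) \<epsilon> \<le> card F1 * card F2"
      proof (rule covnum_mult(2)[OF _ _ F1(1) F2(1)])
        show "?d (m + n) x y = max (?d m x y) (?d n ((shift ^^ m) x) ((shift ^^ m) y))" for x y
          by (rule dyn_dist_split[OF m n])
        show "(shift ^^ m) x \<in> X" if "x \<in> X" for x using that unfolding X_def by (rule XK_shift_pow)
      qed
      then have "real (covnum X (?d (m + n)) \<epsilon>) \<le> real (covnum X (?d m) \<epsilon>) * real (covnum X (?d n) \<epsilon>)"
        using F1(2) F2(2) by (metis of_nat_le_iff of_nat_mult)
      moreover have "1 \<le> covnum X (?d (m + n)) \<epsilon>" using cov1 m by simp
      ultimately have "ln (real (covnum X (?d (m + n)) \<epsilon>)) \<le> ln (real (covnum X (?d m) \<epsilon>) * real (covnum X (?d n) \<epsilon>))"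
        by (subst ln_le_cancel_iff) auto
      also have "\<dots> = ln (real (covnum X (?d m) \<epsilon>)) + ln (real (covnum X (?d n) \<epsilon>))"
        using cov1[OF m] cov1[OF n] by (subst ln_mult) auto
      finally show ?thesis unfolding v_def u_def using m n by simp
    qed
    have vu: "(\<lambda>n. v n / real n) = (\<lambda>n. u n / real n)" by (rule ext) (simp add: v_def)
    define l where "l = (INF n\<in>{1..}. v n / real n)"
    have conv: "(\<lambda>L. u L / real L) \<longlonglongrightarrow> l" using fekete(1)[OF vnn vsub] unfolding l_def vu .
    have lle: "l \<le> u L / real L" if "1 \<le> L" for L using fekete(2)[OF vnn vsub that] unfolding l_def vu v_def using that by simp
    have "(\<lambda>L. (u L / real L) / ln (1 / \<epsilon>)) \<longlonglongrightarrow> l / ln (1 / \<epsilon>)"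
      by (intro tendsto_divide conv tendsto_const) (use lnE in simp)
    then have limv: "lim (\<lambda>L. ln (real (covnum X (?d L) \<epsilon>)) / (real L * ln (1 / \<epsilon>))) = l / ln (1 / \<epsilon>)"
      unfolding seq_eq by (rule limI)
    have lnC: "0 \<le> ln (real C)" using C1 by simp
    have "l \<le> ln (real C) / real N + (ln (real N) + (2 * M + 3) * ln (real C)) / real L" if L: "1 \<le> L" for L
    proof -
      obtain G where G: "covers X (?d L) \<epsilon> G" "card G \<le> N * C ^ (L div N + 2 * M + 3)" using Gex[OF L] by blast
      have "covnum X (?d L) \<epsilon> \<le> N * C ^ (L div N + 2 * M + 3)" using covnum_le[OF G(1)] G(2) by linarith
      then have "real (covnum X (?d L) \<epsilon>) \<le> real N * real C ^ (L div N + 2 * M + 3)"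
        by (metis of_nat_le_iff of_nat_mult of_nat_power)
      then have "u L \<le> ln (real N * real C ^ (L div N + 2 * M + 3))"
        unfolding u_def using cov1[OF L] by (subst ln_le_cancel_iff) auto
      also have "\<dots> = ln (real N) + real (L div N + 2 * M + 3) * ln (real C)"
        using N C1 by (simp add: ln_mult ln_realpow)
      also have "\<dots> \<le> ln (real N) + (real L / real N + 2 * M + 3) * ln (real C)"
      proof -
        have "L div N * N \<le> L" using div_mult_mod_eq[of L N] by linarith
        then have "real (L div N) * real N \<le> real L" by (metis of_nat_le_iff of_nat_mult)
        then have "real (L div N) \<le> real L / real N" using N by (simp add: field_simps)
        then have "real (L div N + 2 * M + 3) \<le> real L / real N + 2 * M + 3" by simp
        then show ?thesis using lnC by (simp add: mult_right_mono)
      qed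
      finally have uL: "u L \<le> ln (real N) + (real L / real N + 2 * M + 3) * ln (real C)" .
      have "u L / real L \<le> (ln (real N) + (real L / real N + 2 * M + 3) * ln (real C)) / real L"
        using uL L by (simp add: divide_right_mono)
      also have "\<dots> = ln (real C) / real N + (ln (real N) + (2 * M + 3) * ln (real C)) / real L"
        using L N by (simp add: field_simps)
      finally show ?thesis using lle[OF L] by linarith
    qed
    then have "l \<le> ln (real C) / real N" by (rule le_of_le_plus_inv)
    then have "l / ln (1 / \<epsilon>) \<le> (ln (real C) / real N) / ln (1 / \<epsilon>)" by (rule divide_right_mono) (use lnE in simp)
    also have "(ln (real C) / real N) / ln (1 / \<epsilon>) = ln (real C) / (real N * ln (1 / \<epsilon>))" by simp
    finally show ?thesis unfolding X_def[symmetric] limv using F(2) C_def \<delta>_def by simp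
  qed
qed

theorem lemma5p1:
  fixes a N :: nat and K :: "(nat \<Rightarrow> nat \<Rightarrow> real) set"
  assumes "N \<ge> 1"
    and "K \<subseteq> block_space a N"
    and "closed K"
  shows "upper_metric_mdim (XK a N K) shift (Dmet a)
           \<le> upper_mdim K (bdist a N) / ereal (real N)"
proof -
  note N = assms(1) and K = assms(2)
  define g where "g \<delta> = ereal (ln (real (covnum K (bdist a N) \<delta>)) / ln (1 / \<delta>))" for \<delta> :: real
  define \<phi> where "\<phi> \<epsilon> = ereal (lim (\<lambda>L. ln (real (covnum (XK a N K) (dyn_dist (Dmet a) shift L) \<epsilon>)) / (real L * ln (1 / \<epsilon>))))" for \<epsilon> :: real
  define Lg where "Lg = Limsup (at_right 0) g"
  have LHS: "upper_metric_mdim (XK a N K) shift (Dmet a) = Limsup (at_right 0) \<phi>"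
    unfolding upper_metric_mdim_def \<phi>_def by simp
  have RHS: "upper_mdim K (bdist a N) = Lg"
    unfolding upper_mdim_def Lg_def g_def by simp
  have Npos: "(0::ereal) < ereal (real N)" "ereal (real N) < \<infinity>" using N by auto
  show ?thesis unfolding LHS RHS
  proof (rule dense_ge)
    fix B assume B: "Lg / ereal (real N) < B"
    show "Limsup (at_right 0) \<phi> \<le> B"
    proof (cases B)
      case PInf then show ?thesis by simp
    next
      case MInf then show ?thesis using B by simp
    next
      case (real b)
      have "Lg < B * ereal (real N)" using B ereal_divide_less_iff[OF Npos] by blast
      then have "Lg < ereal (b * real N)" using real by simp
      then obtain b' where b': "Lg < ereal b'" "ereal b' < ereal (b * real N)" using ereal_dense2 by blast
      have bb: "b' < b * real N" using b' by simp
      have "eventually (\<lambda>\<delta>. g \<delta> < ereal b') (at_right 0)" using b'(1) unfolding Lg_def by (rule Limsup_lessD)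
      then obtain \<eta> where \<eta>: "\<eta> > 0" "\<And>\<delta>. 0 < \<delta> \<Longrightarrow> \<delta> < \<eta> \<Longrightarrow> g \<delta> < ereal b'"
        unfolding eventually_at_right_field by auto
      have gnn: "0 \<le> ln (real (covnum K (bdist a N) \<delta>)) / ln (1 / \<delta>)" if "0 < \<delta>" "\<delta> < 1" for \<delta>
      proof -
        have "0 \<le> ln (real (covnum K (bdist a N) \<delta>))"
          by (cases "covnum K (bdist a N) \<delta> = 0") auto
        moreover have "0 < ln (1 / \<delta>)" using that by simp
        ultimately show ?thesis by simp
      qed
      define \<delta>0 where "\<delta>0 = min \<eta> 1 / 2"
      have d0: "0 < \<delta>0" "\<delta>0 < \<eta>" "\<delta>0 < 1" unfolding \<delta>0_def using \<eta>(1) by auto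
      have b'pos: "b' > 0" using \<eta>(2)[OF d0(1,2)] gnn[OF d0(1,3)] unfolding g_def by simp
      define lc where "lc = ln cc"
      define \<kappa> where "\<kappa> = b' * \<bar>lc\<bar> / (b * real N - b')"
      define bnd where "bnd = min (min 1 (\<eta> * cc)) (exp (- \<kappa>))"
      have bnd0: "bnd > 0" unfolding bnd_def using \<eta>(1) cc_pos by simp
      have ev: "eventually (\<lambda>\<epsilon>. \<phi> \<epsilon> \<le> B) (at_right 0)"
        unfolding eventually_at_right_field
      proof (intro exI[of _ bnd] conjI allI impI)
        show "0 < bnd" by (rule bnd0)
        fix \<epsilon> :: real assume e0: "0 < \<epsilon>" and eb: "\<epsilon> < bnd"
        have e1: "\<epsilon> < 1" and e2: "\<epsilon> < \<eta> * cc" and e3: "\<epsilon> < exp (- \<kappa>)" using eb unfolding bnd_def by auto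
        define \<Lambda> where "\<Lambda> = ln (1 / \<epsilon>)"
        have \<Lambda>0: "\<Lambda> > 0" unfolding \<Lambda>_def using e0 e1 by simp
        have "ln \<epsilon> < - \<kappa>" using e3 e0 by (metis ln_exp ln_less_cancel_iff exp_gt_zero)
        then have \<Lambda>k: "\<kappa> < \<Lambda>" unfolding \<Lambda>_def using e0 by (simp add: ln_div)
        define \<delta> where "\<delta> = \<epsilon> / cc"
        have dpos: "0 < \<delta>" unfolding \<delta>_def using e0 cc_pos by simp
        have deta: "\<delta> < \<eta>" unfolding \<delta>_def using e2 cc_pos by (simp add: field_simps)
        have lnd: "ln (1 / \<delta>) = lc + \<Lambda>"
          unfolding \<delta>_def \<Lambda>_def lc_def using e0 cc_pos by (simp add: ln_div ln_mult)
        define lC where "lC = ln (real (covnum K (bdist a N) \<delta>))"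
        have "g \<delta> < ereal b'" by (rule \<eta>(2)[OF dpos deta])
        then have "lC / ln (1 / \<delta>) < b'" unfolding g_def lC_def by simp
        moreover have lnd0: "ln (1 / \<delta>) > 0"
        proof -
          have "\<bar>lc\<bar> * b' \<le> \<kappa> * (b * real N - b')" unfolding \<kappa>_def using bb by simp
          have "b' * \<bar>lc\<bar> = \<kappa> * (b * real N - b')" unfolding \<kappa>_def using bb by simp
          moreover have "\<kappa> * (b * real N - b') < \<Lambda> * (b * real N - b')" using \<Lambda>k bb by (intro mult_strict_right_mono) auto
          ultimately have "b' * \<bar>lc\<bar> < \<Lambda> * (b * real N - b')" by linarith
          then have "b' * \<bar>lc\<bar> < b' * (b * real N / b' * \<Lambda>) - b' * \<Lambda>" using b'pos by (simp add: field_simps)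
          have "- lc \<le> \<bar>lc\<bar>" by simp
          show ?thesis
          proof (rule ccontr)
            assume "\<not> 0 < ln (1 / \<delta>)"
            then have "\<delta> \<ge> 1" using dpos by (simp add: not_less ln_div)
            then have "g \<delta> = ereal (lC / ln (1 / \<delta>))" unfolding g_def lC_def by simp
            show False using \<open>\<delta> \<ge> 1\<close> deta d0 \<delta>_def e1 cc_def Ssum_nonneg by (simp add: field_simps)
          qed
        qed
        ultimately have lCb: "lC < b' * (lc + \<Lambda>)" using lnd by (simp add: field_simps)
        have "b' * (lc + \<Lambda>) \<le> b' * \<bar>lc\<bar> + b' * \<Lambda>" using b'pos by (simp add: algebra_simps mult_left_mono)
        also have "b' * \<bar>lc\<bar> = \<kappa> * (b * real N - b')" unfolding \<kappa>_def using bb by simp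
        also have "\<kappa> * (b * real N - b') \<le> \<Lambda> * (b * real N - b')" using \<Lambda>k bb by (intro mult_right_mono) auto
        finally have "lC < b * real N * \<Lambda>" using lCb by (simp add: algebra_simps)
        then have psi: "lC / (real N * \<Lambda>) \<le> b" using N \<Lambda>0 by (simp add: field_simps)
        have "\<phi> \<epsilon> \<le> ereal (ln (real (covnum K (bdist a N) (\<epsilon> / cc))) / (real N * ln (1 / \<epsilon>)))"
          unfolding \<phi>_def using eps_bound[OF N K e0 e1] by simp
        also have "\<dots> \<le> ereal b" using psi unfolding lC_def \<delta>_def \<Lambda>_def by simp
        finally show "\<phi> \<epsilon> \<le> B" using real by simp
      qed
      show ?thesis by (rule Limsup_bounded[OF ev])
    qed
  qed
qed

end
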